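(* Let $F$ be an $L$-layer MLP as described in the context, trained with the cross-entropy loss $\mathcal{L}$ by gradient ascent with iterations $t$, and suppose that along this trajectory the logit gradient stays bounded away from zero, i.e. $\|\nabla_z\mathcal{L}(t)\|\ge c>0$ for some constant $c$ and all large $t$. Suppose the logits satisfy $\|z(t)\|\to\infty$. Then: (i) if there is a constant $C_1>0$ with $\|a_{L-1}(t)\|\le C_1$ for all large $t$, it follows that $\|W_L(t)\|\to\infty$; (ii) if there is no such bound on $\|a_{L-1}(t)\|$, there exists a subsequence of iterations $t_k$ such that $\|\nabla_{W_L}\mathcal{L}(t_k)\|\to\infty$.
   Context: An $L$-layer MLP $F$ with input $x$: $a_0=x$; for $1\le l\le L-1$, $h_l=W_la_{l-1}$ and $a_l=\sigma(h_l)$, where $W_l\in\mathbb{R}^{d_l\times d_{l-1}}$ (biases are absorbed into the weights by appending a constant coordinate $1$ to $a_{l-1}$) and $\sigma$ is an activation with $|\sigma'(s)|\le C$ for all $s\in\mathbb{R}$; the logits are $z=W_La_{L-1}\in\mathbb{R}^C$ and the output is $p=\mathrm{softmax}(z)$. The cross-entropy loss for class label $y$ is $\mathcal{L}=-\log(p_y)$, so $\nabla_z\mathcal{L}=p-e_y$ with $e_y$ the $y$-th standard basis vector, and by the chain rule $\nabla_{W_L}\mathcal{L}=(\nabla_z\mathcal{L})\,a_{L-1}^T$. Quantities at iteration $t$ of gradient ascent (parameters updated by adding a positive multiple of the gradient) are written with argument $(t)$. For vectors $\|\cdot\|$ is the Euclidean norm; for matrices it is the operator norm (largest singular value). *)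

theory Defs
  imports "HOL-Analysis.Analysis"
begin

text \<open>Vectors are functions nat => real with an explicit length n (only indices < n matter);
  matrices are functions nat => nat => real with explicit numbers of rows/columns.
  Parameters of the network: W l is the weight matrix of layer l (1 <= l <= L).\<close>

type_synonym vec = "nat \<Rightarrow> real"
type_synonym mat = "nat \<Rightarrow> nat \<Rightarrow> real"
type_synonym params = "nat \<Rightarrow> mat"

definition vnorm :: "nat \<Rightarrow> vec \<Rightarrow> real" where
  "vnorm n v = sqrt (\<Sum>i<n. (v i)\<^sup>2)"

definition mvmul :: "nat \<Rightarrow> mat \<Rightarrow> vec \<Rightarrow> vec" where
  "mvmul n M v = (\<lambda>i. \<Sum>j<n. M i j * v j)"

definition opnorm :: "nat \<Rightarrow> nat \<Rightarrow> mat \<Rightarrow> real" where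
  "opnorm m n M = Sup {vnorm m (mvmul n M v) | v. vnorm n v \<le> 1}"

definition aug :: "nat \<Rightarrow> vec \<Rightarrow> vec" where
  "aug n v = v(n := 1)"

text \<open>Activations a_l (already augmented by the constant coordinate 1, so of length d l + 1):
  a_0 = x, a_l = sigma(W_l a_{l-1}).\<close>
fun act :: "(real \<Rightarrow> real) \<Rightarrow> (nat \<Rightarrow> nat) \<Rightarrow> params \<Rightarrow> vec \<Rightarrow> nat \<Rightarrow> vec" where
  "act \<sigma> d W x 0 = aug (d 0) x"
| "act \<sigma> d W x (Suc l) =
     aug (d (Suc l)) (\<lambda>i. \<sigma> (mvmul (d l + 1) (W (Suc l)) (act \<sigma> d W x l) i))"

definition logits :: "(real \<Rightarrow> real) \<Rightarrow> (nat \<Rightarrow> nat) \<Rightarrow> nat \<Rightarrow> params \<Rightarrow> vec \<Rightarrow> vec" where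
  "logits \<sigma> d L W x = mvmul (d (L - 1) + 1) (W L) (act \<sigma> d W x (L - 1))"

definition softmax :: "nat \<Rightarrow> vec \<Rightarrow> vec" where
  "softmax n z = (\<lambda>i. exp (z i) / (\<Sum>j<n. exp (z j)))"

definition ce :: "nat \<Rightarrow> vec \<Rightarrow> nat \<Rightarrow> real" where
  "ce n z y = - ln (softmax n z y)"

definition loss :: "(real \<Rightarrow> real) \<Rightarrow> (nat \<Rightarrow> nat) \<Rightarrow> nat \<Rightarrow> params \<Rightarrow> vec \<Rightarrow> nat \<Rightarrow> real" where
  "loss \<sigma> d L W x y = ce (d L) (logits \<sigma> d L W x) y"

definition grad_z :: "nat \<Rightarrow> vec \<Rightarrow> nat \<Rightarrow> vec" where
  "grad_z n z y = (\<lambda>i. deriv (\<lambda>s. ce n (z(i := s)) y) (z i))"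

definition upd :: "params \<Rightarrow> nat \<Rightarrow> nat \<Rightarrow> nat \<Rightarrow> real \<Rightarrow> params" where
  "upd W l i j s = W(l := (W l)(i := (W l i)(j := s)))"

definition grad_W :: "(real \<Rightarrow> real) \<Rightarrow> (nat \<Rightarrow> nat) \<Rightarrow> nat \<Rightarrow> vec \<Rightarrow> nat \<Rightarrow> params \<Rightarrow> nat \<Rightarrow> mat" where
  "grad_W \<sigma> d L x y W l = (\<lambda>i j. deriv (\<lambda>s. loss \<sigma> d L (upd W l i j s) x y) (W l i j))"

end

theory Submission
  imports Defs
begin

lemma vnorm_L2: "vnorm n v = L2_set v {..<n}"
  by (simp add: vnorm_def L2_set_def)

lemma vnorm_nonneg: "0 \<le> vnorm n v"
  by (simp add: vnorm_L2)

lemma abs_le_vnorm: "j < n \<Longrightarrow> \<bar>v j\<bar> \<le> vnorm n v"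
proof -
  assume j: "j < n"
  have "\<bar>v j\<bar> \<le> L2_set (\<lambda>i. \<bar>v i\<bar>) {..<n}"
    by (rule member_le_L2_set) (use j in auto)
  also have "L2_set (\<lambda>i. \<bar>v i\<bar>) {..<n} = vnorm n v"
    by (simp add: vnorm_def L2_set_def)
  finally show ?thesis .
qed

lemma vnorm_scale: "0 \<le> r \<Longrightarrow> vnorm n (\<lambda>i. r * v i) = r * vnorm n v"
  by (simp add: vnorm_L2 L2_set_right_distrib)

lemma vnorm_cong: "(\<And>i. i < n \<Longrightarrow> v i = w i) \<Longrightarrow> vnorm n v = vnorm n w"
  by (simp add: vnorm_def)

lemma vnorm_sq: "(vnorm n v)\<^sup>2 = (\<Sum>i<n. (v i)\<^sup>2)"
  by (simp add: vnorm_def sum_nonneg)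

lemma opnorm_bdd: "bdd_above {vnorm m (mvmul n M v) | v. vnorm n v \<le> 1}"
proof -
  have "vnorm m (mvmul n M v) \<le> (\<Sum>i<m. \<Sum>j<n. \<bar>M i j\<bar>)" if "vnorm n v \<le> 1" for v
  proof -
    have "vnorm m (mvmul n M v) \<le> (\<Sum>i<m. \<bar>mvmul n M v i\<bar>)"
      by (simp add: vnorm_L2 L2_set_le_sum_abs)
    also have "\<dots> \<le> (\<Sum>i<m. \<Sum>j<n. \<bar>M i j\<bar>)"
    proof (rule sum_mono)
      fix i
      have "\<bar>mvmul n M v i\<bar> \<le> (\<Sum>j<n. \<bar>M i j * v j\<bar>)"
        unfolding mvmul_def by (rule sum_abs)
      also have "\<dots> \<le> (\<Sum>j<n. \<bar>M i j\<bar>)"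
      proof (rule sum_mono)
        fix j assume "j \<in> {..<n}"
        then have "\<bar>v j\<bar> \<le> 1" using abs_le_vnorm[of j n v] that by simp
        then show "\<bar>M i j * v j\<bar> \<le> \<bar>M i j\<bar>"
          by (simp add: abs_mult mult_left_le)
      qed
      finally show "\<bar>mvmul n M v i\<bar> \<le> (\<Sum>j<n. \<bar>M i j\<bar>)" .
    qed
    finally show ?thesis .
  qed
  then show ?thesis unfolding bdd_above_def by blast
qed

lemma opnorm_ge: "vnorm n v \<le> 1 \<Longrightarrow> vnorm m (mvmul n M v) \<le> opnorm m n M"
  unfolding opnorm_def by (rule cSup_upper[OF _ opnorm_bdd]) blast

lemma opnorm_nonneg: "0 \<le> opnorm m n M"
proof -
  have "vnorm n (\<lambda>_. 0) \<le> 1" by (simp add: vnorm_def)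
  from opnorm_ge[OF this, of m M] show ?thesis using vnorm_nonneg order_trans by blast
qed

lemma mvmul_scale: "mvmul n M (\<lambda>j. r * v j) = (\<lambda>i. r * mvmul n M v i)"
  by (simp add: mvmul_def sum_distrib_left algebra_simps)

lemma opnorm_bound:
  assumes "vnorm n v > 0"
  shows "vnorm m (mvmul n M v) \<le> opnorm m n M * vnorm n v"
proof -
  define r where "r = vnorm n v"
  have r: "r > 0" using assms r_def by simp
  have "vnorm n (\<lambda>j. (1/r) * v j) = 1"
    using r vnorm_scale[of "1/r" n v] by (simp add: r_def)
  then have "vnorm m (mvmul n M (\<lambda>j. (1/r) * v j)) \<le> opnorm m n M"
    by (intro opnorm_ge) simp
  then have "(1/r) * vnorm m (mvmul n M v) \<le> opnorm m n M"
    using r mvmul_scale[of n M "1/r" v] vnorm_scale[of "1/r" m "mvmul n M v"] by simp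
  then show ?thesis using r by (simp add: r_def field_simps)
qed

lemma act_last: "act \<sigma> d W x l (d l) = 1"
  by (cases l) (simp_all add: aug_def)

lemma act_vnorm_ge: "1 \<le> vnorm (d l + 1) (act \<sigma> d W x l)"
  using abs_le_vnorm[of "d l" "d l + 1" "act \<sigma> d W x l"] by (simp add: act_last)

lemma act_indep: "l < L \<Longrightarrow> act \<sigma> d (W(L := M)) x l = act \<sigma> d W x l"
  by (induction l) auto

lemma subseq_exists:
  assumes "\<And>k N. \<exists>t>N. P k t"
  shows "\<exists>r::nat\<Rightarrow>nat. strict_mono r \<and> (\<forall>k. P k (r k))"
proof -
  define f where "f = (\<lambda>k N. SOME t. t > N \<and> P k t)"
  have f: "f k N > N \<and> P k (f k N)" for k N
    unfolding f_def by (rule someI_ex) (use assms in blast)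
  define r where "r = rec_nat (f 0 0) (\<lambda>k rk. f (Suc k) rk)"
  have r0: "r 0 = f 0 0" and rS: "r (Suc k) = f (Suc k) (r k)" for k
    by (simp_all add: r_def)
  have "strict_mono r"
    by (rule strict_mono_Suc_iff[THEN iffD2]) (use f rS in auto)
  moreover have "P k (r k)" for k
    by (cases k) (use f r0 rS in auto)
  ultimately show ?thesis by blast
qed


lemma sum_upd_exp:
  fixes n :: nat and z :: vec
  assumes "i < n"
  shows "(\<Sum>k<n. exp ((z(i:=s)) k)) = (\<Sum>k<n. exp (z k)) - exp (z i) + exp s"
proof -
  have "(\<Sum>k<n. exp ((z(i:=s)) k)) = (\<Sum>k<n. exp (z k) + (if k = i then exp s - exp (z i) else 0))"
    by (rule sum.cong) auto
  also have "\<dots> = (\<Sum>k<n. exp (z k)) + (exp s - exp (z i))"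
    using assms by (simp add: sum.distrib)
  finally show ?thesis by simp
qed

lemma ce_eq:
  assumes "0 < n"
  shows "ce n z y = ln (\<Sum>k<n. exp (z k)) - z y"
proof -
  have "(\<Sum>k<n. exp (z k)) > 0" using assms by (intro sum_pos) auto
  then show ?thesis unfolding ce_def softmax_def by (simp add: ln_div)
qed

lemma ce_deriv:
  fixes n :: nat and z :: vec
  assumes i: "i < n" and y: "y < n"
  shows "((\<lambda>s. ce n (z(i:=s)) y) has_real_derivative
           (softmax n z i - (if i = y then 1 else 0))) (at (z i))"
proof -
  define A where "A = (\<Sum>k<n. exp (z k))"
  have A: "A > 0" unfolding A_def using i by (intro sum_pos) auto
  have eq: "(\<lambda>s. ce n (z(i:=s)) y) = (\<lambda>s. ln (A - exp (z i) + exp s) - (if i = y then s else z y))"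
  proof
    fix s
    have "ce n (z(i:=s)) y = ln (\<Sum>k<n. exp ((z(i:=s)) k)) - (z(i:=s)) y"
      using i by (intro ce_eq) simp
    then show "ce n (z(i:=s)) y = ln (A - exp (z i) + exp s) - (if i = y then s else z y)"
      using sum_upd_exp[OF i, of z s] by (simp add: A_def)
  qed
  have d1: "((\<lambda>s. ln (A - exp (z i) + exp s)) has_real_derivative (exp (z i) / A)) (at (z i))"
  proof -
    have g: "((\<lambda>s. A - exp (z i) + exp s) has_real_derivative (0 - 0 + exp (z i))) (at (z i))"
      by (intro derivative_intros DERIV_exp)
    have f: "(ln has_real_derivative (1 / (A - exp (z i) + exp (z i)))) (at (A - exp (z i) + exp (z i)))"
      using A by (intro DERIV_ln_divide) simp
    have "((\<lambda>s. ln (A - exp (z i) + exp s)) has_real_derivative (1 / (A - exp (z i) + exp (z i))) * (0 - 0 + exp (z i))) (at (z i))"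
      by (rule DERIV_chain2[where f=ln and g="\<lambda>s. A - exp (z i) + exp s", OF f g])
    then show ?thesis by simp
  qed
  show ?thesis
  proof (cases "i = y")
    case True
    have "((\<lambda>s. ln (A - exp (z i) + exp s) - s) has_real_derivative (exp (z i) / A - 1)) (at (z i))"
      by (rule DERIV_diff[OF d1 DERIV_ident])
    then show ?thesis using True unfolding eq by (simp add: softmax_def A_def)
  next
    case False
    have "((\<lambda>s. ln (A - exp (z i) + exp s) - z y) has_real_derivative (exp (z i) / A - 0)) (at (z i))"
      by (rule DERIV_diff[OF d1 DERIV_const])
    then show ?thesis using False unfolding eq by (simp add: softmax_def A_def)
  qed
qed

lemma grad_z_eq:
  assumes "i < n" "y < n"
  shows "grad_z n z y i = softmax n z i - (if i = y then 1 else 0)"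
  unfolding grad_z_def by (rule DERIV_imp_deriv[OF ce_deriv[OF assms]])

lemma logits_upd:
  assumes L: "1 \<le> L" and j: "j < d (L - 1) + 1"
  shows "logits \<sigma> d L (upd W L i j s) x =
    (logits \<sigma> d L W x)(i := logits \<sigma> d L W x i + (s - W L i j) * act \<sigma> d W x (L - 1) j)"
proof -
  define n where "n = d (L - 1) + 1"
  define a where "a = act \<sigma> d W x (L - 1)"
  have act: "act \<sigma> d (upd W L i j s) x (L - 1) = a"
    unfolding upd_def a_def using L by (intro act_indep) simp
  have row: "(\<Sum>j'<n. ((W L i)(j := s)) j' * a j') = (\<Sum>j'<n. W L i j' * a j') + (s - W L i j) * a j"
  proof -
    have "(\<Sum>j'<n. ((W L i)(j := s)) j' * a j') =
          (\<Sum>j'<n. W L i j' * a j' + (if j' = j then (s - W L i j) * a j else 0))"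
      by (rule sum.cong) (auto simp: algebra_simps)
    also have "\<dots> = (\<Sum>j'<n. W L i j' * a j') + (s - W L i j) * a j"
      using j by (simp add: sum.distrib n_def)
    finally show ?thesis .
  qed
  show ?thesis
    unfolding logits_def act[unfolded a_def]
    using row by (auto simp: upd_def mvmul_def n_def a_def)
qed

lemma grad_W_L:
  assumes L: "1 \<le> L" and i: "i < d L" and j: "j < d (L - 1) + 1" and y: "y < d L"
  shows "grad_W \<sigma> d L x y W L i j =
     (softmax (d L) (logits \<sigma> d L W x) i - (if i = y then 1 else 0)) * act \<sigma> d W x (L - 1) j"
proof -
  define z where "z = logits \<sigma> d L W x"
  define aj where "aj = act \<sigma> d W x (L - 1) j"
  define w where "w = W L i j"
  have eq: "(\<lambda>s. loss \<sigma> d L (upd W L i j s) x y) = (\<lambda>s. ce (d L) (z(i := s)) y) \<circ> (\<lambda>s. z i + (s - w) * aj)"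
    by (auto simp: loss_def logits_upd[where L=L and d=d and j=j, OF L j] z_def aj_def w_def)
  have inner: "((\<lambda>s. z i + (s - w) * aj) has_real_derivative aj) (at w)"
    by (auto intro!: derivative_eq_intros)
  have outer: "((\<lambda>s. ce (d L) (z(i := s)) y) has_real_derivative
           (softmax (d L) z i - (if i = y then 1 else 0))) (at (z i + (w - w) * aj))"
    using ce_deriv[OF i y, of z] by simp
  have "((\<lambda>s. loss \<sigma> d L (upd W L i j s) x y) has_real_derivative
          (softmax (d L) z i - (if i = y then 1 else 0)) * aj) (at w)"
    unfolding eq by (rule DERIV_chain[OF outer inner])
  then show ?thesis unfolding grad_W_def
    by (simp add: DERIV_imp_deriv z_def aj_def w_def)
qed


theorem theorem1:
  fixes \<sigma> :: "real \<Rightarrow> real" and d :: "nat \<Rightarrow> nat" and L :: nat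
    and x :: vec and y :: nat and Wt :: "nat \<Rightarrow> params" and \<eta> :: "nat \<Rightarrow> real"
    and C\<sigma> c :: real
  assumes L: "L \<ge> 1"
    and y: "y < d L"
    and sigma_diff: "\<And>s. \<sigma> differentiable (at s)"
    and sigma_bound: "\<And>s. \<bar>deriv \<sigma> s\<bar> \<le> C\<sigma>"
    and ascent: "\<And>t. \<eta> t > 0"
    and step: "\<And>t l i j. 1 \<le> l \<Longrightarrow> l \<le> L \<Longrightarrow> i < d l \<Longrightarrow> j < d (l - 1) + 1 \<Longrightarrow>
        Wt (Suc t) l i j = Wt t l i j + \<eta> t * grad_W \<sigma> d L x y (Wt t) l i j"
    and c_pos: "c > 0"
    and grad_z_bound: "\<forall>\<^sub>F t in sequentially.
        vnorm (d L) (grad_z (d L) (logits \<sigma> d L (Wt t) x) y) \<ge> c"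
    and z_unbounded: "filterlim (\<lambda>t. vnorm (d L) (logits \<sigma> d L (Wt t) x)) at_top sequentially"
  shows "((\<exists>C1>0. \<forall>\<^sub>F t in sequentially. vnorm (d (L - 1) + 1) (act \<sigma> d (Wt t) x (L - 1)) \<le> C1)
            \<longrightarrow> filterlim (\<lambda>t. opnorm (d L) (d (L - 1) + 1) (Wt t L)) at_top sequentially)
       \<and> ((\<not> (\<exists>C1>0. \<forall>\<^sub>F t in sequentially. vnorm (d (L - 1) + 1) (act \<sigma> d (Wt t) x (L - 1)) \<le> C1))
            \<longrightarrow> (\<exists>r. strict_mono r \<and>
                 filterlim (\<lambda>k. opnorm (d L) (d (L - 1) + 1) (grad_W \<sigma> d L x y (Wt (r k)) L))
                   at_top sequentially))"
proof (intro conjI impI)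
  define n where "n = d (L - 1) + 1"
  define m where "m = d L"
  define a where "a = (\<lambda>t. act \<sigma> d (Wt t) x (L - 1))"
  define z where "z = (\<lambda>t. logits \<sigma> d L (Wt t) x)"
  have apos: "vnorm n (a t) \<ge> 1" for t
    unfolding n_def a_def by (rule act_vnorm_ge)
  have zbound: "vnorm m (z t) \<le> opnorm m n (Wt t L) * vnorm n (a t)" for t
    unfolding z_def logits_def m_def
    using opnorm_bound[of n "a t" m "Wt t L"] apos[of t] by (simp add: a_def n_def m_def)
  {
    assume "\<exists>C1>0. \<forall>\<^sub>F t in sequentially. vnorm (d (L - 1) + 1) (act \<sigma> d (Wt t) x (L - 1)) \<le> C1"
    then obtain C1 where C1: "C1 > 0" and ev: "\<forall>\<^sub>F t in sequentially. vnorm n (a t) \<le> C1"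
      by (auto simp: n_def a_def)
    show "filterlim (\<lambda>t. opnorm (d L) (d (L - 1) + 1) (Wt t L)) at_top sequentially"
      unfolding filterlim_at_top
    proof
      fix Z
      have "\<forall>\<^sub>F t in sequentially. Z * C1 \<le> vnorm m (z t)"
        using z_unbounded unfolding filterlim_at_top z_def m_def by blast
      with ev show "\<forall>\<^sub>F t in sequentially. Z \<le> opnorm (d L) (d (L - 1) + 1) (Wt t L)"
      proof eventually_elim
        case (elim t)
        have "Z * C1 \<le> opnorm m n (Wt t L) * vnorm n (a t)" using elim zbound[of t] by linarith
        also have "\<dots> \<le> opnorm m n (Wt t L) * C1"
          using elim opnorm_nonneg by (intro mult_left_mono) auto
        finally show ?case using C1 by (simp add: m_def n_def)
      qed
    qed
  }
  {
    assume nb: "\<not> (\<exists>C1>0. \<forall>\<^sub>F t in sequentially. vnorm (d (L - 1) + 1) (act \<sigma> d (Wt t) x (L - 1)) \<le> C1)"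
    obtain N0 where N0: "\<And>t. t \<ge> N0 \<Longrightarrow> c \<le> vnorm m (grad_z m (z t) y)"
      using grad_z_bound unfolding eventually_sequentially m_def z_def by blast
    define P where "P = (\<lambda>k t. N0 \<le> t \<and> real k < vnorm n (a t))"
    have ex: "\<exists>t>N. P k t" for k N
    proof (rule ccontr)
      assume "\<not> (\<exists>t>N. P k t)"
      then have "\<forall>t\<ge>max N0 (Suc N). vnorm n (a t) \<le> real k + 1"
        unfolding P_def by fastforce
      then have "\<forall>\<^sub>F t in sequentially. vnorm n (a t) \<le> real k + 1"
        unfolding eventually_sequentially by blast
      then show False using nb by (auto simp: n_def a_def)
    qed
    obtain r :: "nat \<Rightarrow> nat" where r: "strict_mono r" and Pr: "\<And>k. P k (r k)"
      using subseq_exists[of P, OF ex] by blast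
    have key: "c * vnorm n (a t) \<le> opnorm m n (grad_W \<sigma> d L x y (Wt t) L)" if t: "t \<ge> N0" for t
    proof -
      define R where "R = vnorm n (a t)"
      define g where "g = grad_z m (z t) y"
      have R: "R \<ge> 1" using apos R_def by simp
      define G where "G = grad_W \<sigma> d L x y (Wt t) L"
      have G: "G i j = g i * a t j" if "i < m" "j < n" for i j
        unfolding G_def g_def
        using grad_W_L[where L=L and i=i and j=j and d=d and y=y and \<sigma>=\<sigma> and x=x and W="Wt t", OF L] grad_z_eq[of i m y "z t"] that y
        by (simp add: m_def n_def z_def a_def)
      have sumsq: "(\<Sum>j<n. a t j * a t j) = R * R"
        using vnorm_sq[of n "a t"] by (simp add: R_def power2_eq_square)
      have mv: "mvmul n G (\<lambda>j. (1/R) * a t j) i = R * g i" if "i < m" for i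
      proof -
        have "mvmul n G (\<lambda>j. (1/R) * a t j) i = (\<Sum>j<n. (g i / R) * (a t j * a t j))"
          unfolding mvmul_def by (rule sum.cong) (auto simp: G that)
        also have "\<dots> = (g i / R) * (R * R)" by (simp only: sum_distrib_left[symmetric] sumsq)
        finally show ?thesis using R by simp
      qed
      have "vnorm n (\<lambda>j. (1/R) * a t j) = 1"
        using R vnorm_scale[of "1/R" n "a t"] by (simp add: R_def)
      then have "vnorm m (mvmul n G (\<lambda>j. (1/R) * a t j)) \<le> opnorm m n G"
        by (intro opnorm_ge) simp
      also have "vnorm m (mvmul n G (\<lambda>j. (1/R) * a t j)) = R * vnorm m g"
        using vnorm_cong[of m "mvmul n G (\<lambda>j. (1/R) * a t j)" "\<lambda>i. R * g i"] mv
          vnorm_scale[of R m g] R by simp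
      finally have "R * vnorm m g \<le> opnorm m n G" .
      moreover have "c * R \<le> vnorm m g * R" using N0[OF t] R unfolding g_def
        by (intro mult_right_mono) auto
      ultimately show ?thesis by (simp add: R_def G_def mult.commute)
    qed
    show "\<exists>r. strict_mono r \<and>
                 filterlim (\<lambda>k. opnorm (d L) (d (L - 1) + 1) (grad_W \<sigma> d L x y (Wt (r k)) L))
                   at_top sequentially"
    proof (intro exI conjI)
      show "strict_mono r" by (rule r)
      show "filterlim (\<lambda>k. opnorm (d L) (d (L - 1) + 1) (grad_W \<sigma> d L x y (Wt (r k)) L)) at_top sequentially"
        unfolding filterlim_at_top eventually_sequentially
      proof
        fix Z :: real
        show "\<exists>N. \<forall>k\<ge>N. Z \<le> opnorm (d L) (d (L - 1) + 1) (grad_W \<sigma> d L x y (Wt (r k)) L)"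
        proof (intro exI allI impI)
          fix k assume k: "nat \<lceil>Z / c\<rceil> \<le> k"
          have "Z / c \<le> real k" using k by linarith
          then have "Z \<le> c * real k" using c_pos by (simp add: field_simps)
          also have "\<dots> \<le> c * vnorm n (a (r k))"
            using Pr[of k] c_pos unfolding P_def by (intro mult_left_mono) auto
          also have "\<dots> \<le> opnorm m n (grad_W \<sigma> d L x y (Wt (r k)) L)"
            using key Pr[of k] unfolding P_def by blast
          finally show "Z \<le> opnorm (d L) (d (L - 1) + 1) (grad_W \<sigma> d L x y (Wt (r k)) L)"
            by (simp add: m_def n_def)
        qed
      qed
    qed
  }
qed

end
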